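(* Let $A$ (in $\mathcal H$) and $B$ (in $\mathcal K$) be closed densely defined operators with $A\dashv B$ via a bounded intertwining operator $T$, and assume that $T^{-1}$ is everywhere defined and bounded. Then $\rho(A)\setminus\sigma_p(B)\subseteq\rho(B)$ and $\rho(B)\setminus\sigma_r(A)\subseteq\rho(A)$.
   Context: A bounded operator $T:\mathcal H\to\mathcal K$ is a bounded intertwining operator for $A$ and $B$ if $T D(A)\subseteq D(B)$ and $BT\xi=TA\xi$ for all $\xi\in D(A)$. $A\dashv B$ (quasi-similarity) means there is a bounded intertwining operator $T$ for $A$ and $B$ that is injective with densely defined inverse $T^{-1}$. Spectral notions: $\rho(A)$ = set of $\lambda$ with $A-\lambda I$ injective and $(A-\lambda I)^{-1}$ bounded everywhere defined; $\sigma_p$ = set of eigenvalues; $\sigma_r(A)$ = set of $\lambda$ with $A-\lambda I$ injective and non-dense range. *)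

theory Defs
  imports "HOL-Analysis.Analysis"
begin

class complex_vector = real_vector +
  fixes scaleC :: "complex \<Rightarrow> 'a \<Rightarrow> 'a"  (infixr \<open>*\<^sub>C\<close> 75)
  assumes scaleC_add_right: "a *\<^sub>C (x + y) = a *\<^sub>C x + a *\<^sub>C y"
    and scaleC_add_left: "(a + b) *\<^sub>C x = a *\<^sub>C x + b *\<^sub>C x"
    and scaleC_scaleC: "a *\<^sub>C (b *\<^sub>C x) = (a * b) *\<^sub>C x"
    and scaleC_one: "1 *\<^sub>C x = x"
    and scaleR_scaleC: "scaleR r x = (complex_of_real r) *\<^sub>C x"

class complex_normed_vector = complex_vector + real_normed_vector +
  assumes norm_scaleC: "norm (a *\<^sub>C x) = cmod a * norm x"

class complex_inner = complex_normed_vector +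
  fixes cinner :: "'a \<Rightarrow> 'a \<Rightarrow> complex"
  assumes cinner_commute: "cinner x y = cnj (cinner y x)"
    and cinner_add_left: "cinner (x + y) z = cinner x z + cinner y z"
    and cinner_scaleC_left: "cinner (r *\<^sub>C x) y = cnj r * cinner x y"
    and norm_eq_sqrt_cinner: "norm x = sqrt (Re (cinner x x))"

class chilbert_space = complex_inner + complete_space

text \<open>An operator from H to K is a pair (D, A) with D a subset of H (its domain)
  and A a map that is complex linear on the linear subspace D.\<close>

definition csubspace :: "'a::complex_vector set \<Rightarrow> bool" where
  "csubspace D \<longleftrightarrow> 0 \<in> D \<and> (\<forall>x\<in>D. \<forall>y\<in>D. x + y \<in> D) \<and> (\<forall>c. \<forall>x\<in>D. c *\<^sub>C x \<in> D)"

definition linear_operator :: "'a::complex_vector set \<Rightarrow> ('a \<Rightarrow> 'b::complex_vector) \<Rightarrow> bool" where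
  "linear_operator D A \<longleftrightarrow> csubspace D \<and>
     (\<forall>x\<in>D. \<forall>y\<in>D. A (x + y) = A x + A y) \<and> (\<forall>c. \<forall>x\<in>D. A (c *\<^sub>C x) = c *\<^sub>C A x)"

definition densely_defined :: "'a::complex_normed_vector set \<Rightarrow> bool" where
  "densely_defined D \<longleftrightarrow> closure D = UNIV"

definition closed_operator :: "'a::complex_normed_vector set \<Rightarrow> ('a \<Rightarrow> 'b::complex_normed_vector) \<Rightarrow> bool" where
  "closed_operator D A \<longleftrightarrow> linear_operator D A \<and> closed ((\<lambda>x. (x, A x)) ` D)"

definition bounded_clinear :: "('a::complex_normed_vector \<Rightarrow> 'b::complex_normed_vector) \<Rightarrow> bool" where
  "bounded_clinear T \<longleftrightarrow> linear_operator UNIV T \<and> (\<exists>K. \<forall>x. norm (T x) \<le> norm x * K)"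

definition bounded_intertwining ::
  "('a::complex_normed_vector \<Rightarrow> 'b::complex_normed_vector) \<Rightarrow> 'a set \<Rightarrow> ('a \<Rightarrow> 'a) \<Rightarrow> 'b set \<Rightarrow> ('b \<Rightarrow> 'b) \<Rightarrow> bool" where
  "bounded_intertwining T DA A DB B \<longleftrightarrow>
     bounded_clinear T \<and> T ` DA \<subseteq> DB \<and> (\<forall>x\<in>DA. B (T x) = T (A x))"

text \<open>Quasi-similarity via a given T: T is an injective bounded intertwining operator
  whose inverse (defined on the range of T) is densely defined.\<close>
definition quasi_similar_via ::
  "('a::complex_normed_vector \<Rightarrow> 'b::complex_normed_vector) \<Rightarrow> 'a set \<Rightarrow> ('a \<Rightarrow> 'a) \<Rightarrow> 'b set \<Rightarrow> ('b \<Rightarrow> 'b) \<Rightarrow> bool" where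
  "quasi_similar_via T DA A DB B \<longleftrightarrow>
     bounded_intertwining T DA A DB B \<and> inj T \<and> densely_defined (range T)"

abbreviation shifted :: "('a \<Rightarrow> 'a) \<Rightarrow> complex \<Rightarrow> 'a \<Rightarrow> 'a::complex_vector" where
  "shifted A l \<equiv> (\<lambda>x. A x - l *\<^sub>C x)"

definition resolvent_set :: "'a set \<Rightarrow> ('a \<Rightarrow> 'a::complex_normed_vector) \<Rightarrow> complex set" where
  "resolvent_set D A = {l. inj_on (shifted A l) D \<and> shifted A l ` D = UNIV \<and>
      bounded_clinear (the_inv_into D (shifted A l))}"

definition point_spectrum :: "'a set \<Rightarrow> ('a \<Rightarrow> 'a::complex_normed_vector) \<Rightarrow> complex set" where
  "point_spectrum D A = {l. \<exists>x\<in>D. x \<noteq> 0 \<and> A x = l *\<^sub>C x}"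

definition residual_spectrum :: "'a set \<Rightarrow> ('a \<Rightarrow> 'a::complex_normed_vector) \<Rightarrow> complex set" where
  "residual_spectrum D A = {l. inj_on (shifted A l) D \<and> closure (shifted A l ` D) \<noteq> UNIV}"

end

theory Submission
  imports Defs
begin

lemma scaleC_minus1: "(-1::complex) *\<^sub>C (x::'a::complex_vector) = - x"
  by (metis scaleR_scaleC scaleR_minus1_left of_real_minus of_real_1)

lemma scaleC_diff: "(a::complex) *\<^sub>C ((x::'a::complex_vector) - y) = a *\<^sub>C x - a *\<^sub>C y"
proof -
  have "a *\<^sub>C (x - y) + a *\<^sub>C y = a *\<^sub>C x" by (metis scaleC_add_right diff_add_cancel)
  then show ?thesis by (metis add_diff_cancel)
qed

lemma diff_swap: "(a::'a::ab_group_add) - b = c - d \<Longrightarrow> a - c = b - d"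
  by (simp add: algebra_simps)

lemma lin_diff:
  assumes "linear_operator D A" "x \<in> D" "y \<in> D"
  shows "x - y \<in> D" "A (x - y) = A x - A y"
proof -
  have s: "csubspace D" using assms(1) unfolding linear_operator_def by auto
  have my: "(-1::complex) *\<^sub>C y \<in> D" using s assms(3) unfolding csubspace_def by auto
  have e: "x - y = x + (-1::complex) *\<^sub>C y" by (simp add: scaleC_minus1)
  show "x - y \<in> D" using s my assms(2) unfolding csubspace_def by (metis e)
  have "A (x + (-1::complex) *\<^sub>C y) = A x + A ((-1::complex) *\<^sub>C y)"
    using assms(1) my assms(2) unfolding linear_operator_def by auto
  also have "A ((-1::complex) *\<^sub>C y) = (-1::complex) *\<^sub>C A y"
    using assms(1) assms(3) unfolding linear_operator_def by auto
  finally have "A (x + (-1::complex) *\<^sub>C y) = A x + (-1::complex) *\<^sub>C A y" .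
  then show "A (x - y) = A x - A y" unfolding e by (simp add: scaleC_minus1)
qed

lemma lin_scale: "linear_operator D A \<Longrightarrow> x \<in> D \<Longrightarrow> A (c *\<^sub>C x) = c *\<^sub>C A x"
  unfolding linear_operator_def by auto

lemma bclin_bl:
  assumes "bounded_clinear f" shows "bounded_linear f"
proof -
  have l: "linear_operator UNIV f" and b: "\<exists>K. \<forall>x. norm (f x) \<le> norm x * K"
    using assms unfolding bounded_clinear_def by auto
  from b obtain K where K: "\<forall>x. norm (f x) \<le> norm x * K" by auto
  show ?thesis
  proof (rule bounded_linear_intro[where K=K])
    fix x y show "f (x + y) = f x + f y" using l unfolding linear_operator_def by auto
  next
    fix r x show "f (r *\<^sub>R x) = r *\<^sub>R f x"
      using l unfolding linear_operator_def by (simp add: scaleR_scaleC)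
  next
    fix x show "norm (f x) \<le> norm x * K" using K by auto
  qed
qed

lemma bclin_comp:
  assumes "bounded_clinear f" "bounded_clinear g"
  shows "bounded_clinear (\<lambda>x. f (g x))"
proof -
  have lf: "linear_operator UNIV f" and lg: "linear_operator UNIV g"
    using assms unfolding bounded_clinear_def by auto
  obtain K1 where K1: "\<forall>x. norm (f x) \<le> norm x * K1" using assms(1) unfolding bounded_clinear_def by auto
  obtain K2 where K2: "\<forall>x. norm (g x) \<le> norm x * K2" using assms(2) unfolding bounded_clinear_def by auto
  have "norm (f (g x)) \<le> norm x * (max K2 0 * max K1 0)" for x
  proof -
    have "norm (f (g x)) \<le> norm (g x) * max K1 0"
      using K1 by (meson max.cobounded1 mult_left_mono norm_ge_zero order_trans)
    also have "norm (g x) \<le> norm x * max K2 0"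
      using K2 by (meson max.cobounded1 mult_left_mono norm_ge_zero order_trans)
    hence "norm (g x) * max K1 0 \<le> norm x * max K2 0 * max K1 0"
      by (simp add: mult_right_mono)
    finally show ?thesis by (simp add: mult.assoc)
  qed
  moreover have "linear_operator UNIV (\<lambda>x. f (g x))"
    using lf lg unfolding linear_operator_def by auto
  ultimately show ?thesis unfolding bounded_clinear_def by blast
qed

lemma bl_scaleC: "bounded_linear (\<lambda>x::'a::complex_normed_vector. l *\<^sub>C x)"
proof (rule bounded_linear_intro[where K="cmod l"])
  fix x y :: 'a show "l *\<^sub>C (x + y) = l *\<^sub>C x + l *\<^sub>C y" by (rule scaleC_add_right)
next
  fix r and x :: 'a show "l *\<^sub>C (r *\<^sub>R x) = r *\<^sub>R (l *\<^sub>C x)"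
    by (simp add: scaleR_scaleC scaleC_scaleC mult.commute)
next
  fix x :: 'a show "norm (l *\<^sub>C x) \<le> norm x * cmod l"
    by (simp add: norm_scaleC mult.commute)
qed

theorem corollary3p12:
  fixes DA :: "'a::chilbert_space set" and A :: "'a \<Rightarrow> 'a"
    and DB :: "'b::chilbert_space set" and B :: "'b \<Rightarrow> 'b"
    and T :: "'a \<Rightarrow> 'b"
  assumes "closed_operator DA A" and "densely_defined DA"
    and "closed_operator DB B" and "densely_defined DB"
    and "quasi_similar_via T DA A DB B"
    and "surj T" and "bounded_clinear (inv T)"
  shows "resolvent_set DA A - point_spectrum DB B \<subseteq> resolvent_set DB B \<and>
         resolvent_set DB B - residual_spectrum DA A \<subseteq> resolvent_set DA A"
proof -
  have lA: "linear_operator DA A" using assms(1) unfolding closed_operator_def by auto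
  have lB: "linear_operator DB B" using assms(3) unfolding closed_operator_def by auto
  have bT: "bounded_clinear T" and TD: "T ` DA \<subseteq> DB" and TI: "\<forall>x\<in>DA. B (T x) = T (A x)"
    and injT: "inj T"
    using assms(5) unfolding quasi_similar_via_def bounded_intertwining_def by auto
  have lT: "linear_operator UNIV T" using bT unfolding bounded_clinear_def by auto
  have Tdiff: "T (x - y) = T x - T y" for x y using lin_diff[OF lT] by auto
  have Tsc: "T (c *\<^sub>C x) = c *\<^sub>C T x" for c x using lin_scale[OF lT] by auto
  have invT1: "inv T (T x) = x" for x using injT by simp
  have invT2: "T (inv T y) = y" for y using assms(6) by (simp add: surj_f_inv_f)
  have shT: "shifted B l (T x) = T (shifted A l x)" if "x \<in> DA" for l x
    using TI that by (simp add: Tdiff Tsc)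
  have part1: "l \<in> resolvent_set DB B" if l1: "l \<in> resolvent_set DA A" and l2: "l \<notin> point_spectrum DB B" for l
  proof -
    define RA where "RA = the_inv_into DA (shifted A l)"
    have iA: "inj_on (shifted A l) DA" and sA: "shifted A l ` DA = UNIV" and bRA: "bounded_clinear RA"
      using l1 unfolding resolvent_set_def RA_def by auto
    have RAin: "RA y \<in> DA" for y unfolding RA_def using the_inv_into_into[OF iA] sA by auto
    have RAeq: "shifted A l (RA y) = y" for y unfolding RA_def using f_the_inv_into_f[OF iA] sA by auto
    have iB: "inj_on (shifted B l) DB"
    proof (rule inj_onI)
      fix x y assume x: "x \<in> DB" and y: "y \<in> DB" and e: "shifted B l x = shifted B l y"
      have "B x - B y = l *\<^sub>C x - l *\<^sub>C y" using e by (metis diff_swap)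
      hence "B (x - y) = l *\<^sub>C (x - y)" using lin_diff(2)[OF lB x y]
        by (simp add: scaleC_diff)
      moreover have "x - y \<in> DB" using lin_diff[OF lB x y] by auto
      ultimately have "x - y = 0" using l2 unfolding point_spectrum_def by auto
      thus "x = y" by simp
    qed
    define S where "S = (\<lambda>y. T (RA (inv T y)))"
    have Sin: "S y \<in> DB" for y unfolding S_def using TD RAin by auto
    have Seq: "shifted B l (S y) = y" for y
    proof -
      have "shifted B l (S y) = T (shifted A l (RA (inv T y)))" unfolding S_def by (rule shT[OF RAin])
      also have "\<dots> = T (inv T y)" by (simp only: RAeq)
      also have "\<dots> = y" by (rule invT2)
      finally show ?thesis .
    qed
    have sB: "shifted B l ` DB = UNIV"
    proof -
      have "y \<in> shifted B l ` DB" for y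
        by (rule image_eqI[where f="shifted B l", OF Seq[of y, symmetric] Sin])
      thus ?thesis by blast
    qed
    have "the_inv_into DB (shifted B l) = S"
      by (rule ext, rule the_inv_into_f_eq[OF iB Seq Sin])
    moreover have "bounded_clinear S" unfolding S_def
      by (rule bclin_comp[OF bT bclin_comp[OF bRA assms(7)]])
    ultimately show ?thesis using iB sB unfolding resolvent_set_def by auto
  qed
  have part2: "l \<in> resolvent_set DA A" if l1: "l \<in> resolvent_set DB B" and l2: "l \<notin> residual_spectrum DA A" for l
  proof -
    define RB where "RB = the_inv_into DB (shifted B l)"
    have iB: "inj_on (shifted B l) DB" and sB: "shifted B l ` DB = UNIV" and bRB: "bounded_clinear RB"
      using l1 unfolding resolvent_set_def RB_def by auto
    have iA: "inj_on (shifted A l) DA"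
    proof (rule inj_onI)
      fix x y assume x: "x \<in> DA" and y: "y \<in> DA" and e: "shifted A l x = shifted A l y"
      have "shifted B l (T x) = shifted B l (T y)" using shT[OF x] shT[OF y] e by simp
      hence "T x = T y" using iB TD x y by (meson image_subset_iff inj_onD)
      thus "x = y" using injT by (simp add: inj_eq)
    qed
    have dense: "closure (shifted A l ` DA) = UNIV" using l2 iA unfolding residual_spectrum_def by auto
    define S where "S = (\<lambda>z. inv T (RB (T z)))"
    have bS: "bounded_clinear S" unfolding S_def
      by (rule bclin_comp[OF assms(7) bclin_comp[OF bRB bT]])
    have Sx: "S (shifted A l x) = x" if x: "x \<in> DA" for x
    proof -
      have Tx: "T x \<in> DB" using TD x by blast
      have "RB (shifted B l (T x)) = T x" unfolding RB_def
        by (rule the_inv_into_f_f[OF iB Tx])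
      hence "RB (T (shifted A l x)) = T x" by (simp only: shT[OF x])
      hence "inv T (RB (T (shifted A l x))) = x" by (simp only: invT1)
      thus ?thesis unfolding S_def .
    qed
    have blS: "bounded_linear S" by (rule bclin_bl[OF bS])
    have cl: "closed (shifted A l ` DA)"
      unfolding closed_sequential_limits
    proof (intro allI impI)
      fix zs z assume h: "(\<forall>n. zs n \<in> shifted A l ` DA) \<and> zs \<longlonglongrightarrow> z"
      then have "\<forall>n. \<exists>x. x \<in> DA \<and> zs n = shifted A l x" by (auto simp only: image_iff Bex_def)
      then have "\<exists>xs. \<forall>n. xs n \<in> DA \<and> zs n = shifted A l (xs n)" by (rule choice)
      then obtain xs where xs0: "\<forall>n. xs n \<in> DA \<and> zs n = shifted A l (xs n)" by blast
      have xs: "\<And>n. xs n \<in> DA" "\<And>n. zs n = shifted A l (xs n)" using xs0 by auto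
      have xS: "xs n = S (zs n)" for n using Sx[OF xs(1)[of n]] xs(2)[of n] by simp
      have c1: "xs \<longlonglongrightarrow> S z" unfolding xS using h bounded_linear.tendsto[OF blS] by auto
      have Ax: "A (xs n) = zs n + l *\<^sub>C xs n" for n using xs by simp
      have c2: "(\<lambda>n. A (xs n)) \<longlonglongrightarrow> z + l *\<^sub>C S z"
        unfolding Ax using h c1 bounded_linear.tendsto[OF bl_scaleC] by (intro tendsto_add) auto
      have conv: "(\<lambda>n. (xs n, A (xs n))) \<longlonglongrightarrow> (S z, z + l *\<^sub>C S z)"
        using c1 c2 by (rule tendsto_Pair)
      have mem: "\<forall>n. (xs n, A (xs n)) \<in> (\<lambda>x. (x, A x)) ` DA" using xs(1) by (intro allI imageI)
      have clo: "closed ((\<lambda>x. (x, A x)) ` DA)" using assms(1) unfolding closed_operator_def by blast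
      have "(\<forall>n. (xs n, A (xs n)) \<in> (\<lambda>x. (x, A x)) ` DA) \<and> (\<lambda>n. (xs n, A (xs n))) \<longlonglongrightarrow> (S z, z + l *\<^sub>C S z)
         \<longrightarrow> (S z, z + l *\<^sub>C S z) \<in> (\<lambda>x. (x, A x)) ` DA"
        using clo[unfolded closed_sequential_limits] by (elim allE)
      hence "(S z, z + l *\<^sub>C S z) \<in> (\<lambda>x. (x, A x)) ` DA" using mem conv by (rule mp[OF _ conjI])
      then obtain w where w: "w \<in> DA" "(S z, z + l *\<^sub>C S z) = (w, A w)" by (rule imageE)
      have wS: "S z = w" using w(2) by (simp only: prod.inject)
      have wA: "z + l *\<^sub>C S z = A w" using w(2) unfolding prod.inject by (rule conjunct2)
      have m1: "S z \<in> DA" using w(1) by (simp only: wS)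
      have "A w = z + l *\<^sub>C S z" using wA by (rule sym)
      hence m2: "A (S z) = z + l *\<^sub>C S z" by (simp only: wS)
      have "shifted A l (S z) = z" by (simp only: m2 add_diff_cancel)
      thus "z \<in> shifted A l ` DA" using m1 by (rule image_eqI[where f="shifted A l", OF sym])
    qed
    have sA: "shifted A l ` DA = UNIV" using dense by (simp only: closure_closed[OF cl])
    have Sin: "S z \<in> DA" and Seq: "shifted A l (S z) = z" for z
    proof -
      have "z \<in> shifted A l ` DA" unfolding sA by (rule UNIV_I)
      then obtain x where x: "x \<in> DA" "z = shifted A l x" by (rule imageE)
      show "S z \<in> DA" "shifted A l (S z) = z" using x Sx[OF x(1)] by simp_all
    qed
    have "the_inv_into DA (shifted A l) = S"
      by (rule ext, rule the_inv_into_f_eq[OF iA Seq Sin])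
    thus ?thesis using iA sA bS unfolding resolvent_set_def by auto
  qed
  show ?thesis using part1 part2 by blast
qed

end
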